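(* Let $n,d,t$ be integers with $2\le d\le n-3$ and $2\le t\le d$. Let $G=G_{n,d,t}$, with path $P=v_1\dots v_{d+1}$ as in its construction, and let $w$ be a vertex of $G$ not on $P$. Then $\mu_{n-d}(G-v_iw)<n-d+2$ for each $i\in\{t-1,t,t+1\}$.
   Context: For a graph $G$ of order $n$, $\mu_1(G)\ge\dots\ge\mu_n(G)$ denote the eigenvalues of the Laplacian matrix $L(G)=D(G)-A(G)$; $G-e$ denotes deletion of edge $e$. $G_{n,d,t}$ is the graph obtained from a path $P=v_1v_2\dots v_{d+1}$ and a vertex-disjoint complete graph $K_{n-d-1}$ by adding all edges between every vertex of $K_{n-d-1}$ and each of $v_{t-1},v_t,v_{t+1}$. *)

theory Defs
  imports "Jordan_Normal_Form.Char_Poly"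
begin

text \<open>Simple graphs on the vertex set {0..<n}, given by a symmetric irreflexive
adjacency predicate.\<close>

definition laplacian :: "nat \<Rightarrow> (nat \<Rightarrow> nat \<Rightarrow> bool) \<Rightarrow> real mat" where
  "laplacian n adj = mat n n (\<lambda>(i,j).
     if i = j then real (card {k \<in> {0..<n}. adj i k})
     else if adj i j then -1 else 0)"

text \<open>Eigenvalues (with multiplicity) of a real matrix whose characteristic
polynomial splits over the reals (true for symmetric matrices such as Laplacians),
listed in non-increasing order.\<close>

definition eigenvalues_desc :: "real mat \<Rightarrow> real list" where
  "eigenvalues_desc A = rev (sort (SOME es. char_poly A = prod_list (map (\<lambda>e. [:-e, 1:]) es)))"

definition lap_mu :: "nat \<Rightarrow> (nat \<Rightarrow> nat \<Rightarrow> bool) \<Rightarrow> nat \<Rightarrow> real" where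
  "lap_mu n adj k = eigenvalues_desc (laplacian n adj) ! (k - 1)"

text \<open>Path vertex v_i (i = 1..d+1) is the number i-1; the clique K_{n-d-1}
consists of the vertices d+1, ..., n-1.\<close>
definition pv :: "nat \<Rightarrow> nat" where "pv i = i - 1"

definition G_ndt :: "nat \<Rightarrow> nat \<Rightarrow> nat \<Rightarrow> nat \<Rightarrow> nat \<Rightarrow> bool" where
  "G_ndt n d t a b \<longleftrightarrow> a < n \<and> b < n \<and> a \<noteq> b \<and>
     ((a \<le> d \<and> b \<le> d \<and> (a = b + 1 \<or> b = a + 1))
      \<or> (d < a \<and> d < b)
      \<or> (d < a \<and> b \<in> {pv (t-1), pv t, pv (t+1)})
      \<or> (d < b \<and> a \<in> {pv (t-1), pv t, pv (t+1)}))"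

definition delete_edge :: "(nat \<Rightarrow> nat \<Rightarrow> bool) \<Rightarrow> nat \<Rightarrow> nat \<Rightarrow> nat \<Rightarrow> nat \<Rightarrow> bool" where
  "delete_edge adj x y a b \<longleftrightarrow> adj a b \<and> \<not> ((a = x \<and> b = y) \<or> (a = y \<and> b = x))"

end

theory Submission
  imports Defs "Jordan_Normal_Form.Schur_Decomposition" "Jordan_Normal_Form.Determinant"
begin


definition dotf :: "nat \<Rightarrow> (nat \<Rightarrow> real) \<Rightarrow> (nat \<Rightarrow> real) \<Rightarrow> real" where
  "dotf n x y = (\<Sum>i<n. x i * y i)"

definition mvf :: "nat \<Rightarrow> real mat \<Rightarrow> (nat \<Rightarrow> real) \<Rightarrow> nat \<Rightarrow> real" where
  "mvf n A x i = (\<Sum>j<n. A $$ (i,j) * x j)"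

lemma dotf_comm: "dotf n x y = dotf n y x"
  unfolding dotf_def by (simp add: mult.commute)

lemma dotf_cong: "(\<And>i. i < n \<Longrightarrow> x i = x' i) \<Longrightarrow> (\<And>i. i < n \<Longrightarrow> y i = y' i) \<Longrightarrow> dotf n x y = dotf n x' y'"
  unfolding dotf_def by (rule sum.cong) auto

lemma mvf_cong: "(\<And>i. i < n \<Longrightarrow> x i = x' i) \<Longrightarrow> mvf n A x i = mvf n A x' i"
  unfolding mvf_def by (rule sum.cong) auto

lemma dotf_sym_mvf:
  assumes sym: "\<And>i j. i < n \<Longrightarrow> j < n \<Longrightarrow> A $$ (i,j) = A $$ (j,i)"
  shows "dotf n x (mvf n A y) = dotf n (mvf n A x) y"
proof -
  have "dotf n x (mvf n A y) = (\<Sum>i<n. \<Sum>j<n. x i * A $$ (i,j) * y j)"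
    unfolding dotf_def mvf_def by (simp add: sum_distrib_left mult.assoc)
  also have "\<dots> = (\<Sum>j<n. \<Sum>i<n. x i * A $$ (i,j) * y j)" by (rule sum.swap)
  also have "\<dots> = dotf n (mvf n A x) y"
    unfolding dotf_def mvf_def by (auto simp: sum_distrib_left sum_distrib_right sym ac_simps intro!: sum.cong)
  finally show ?thesis .
qed

lemma dotf_self_nonneg: "dotf n x x \<ge> 0"
  unfolding dotf_def by (auto intro: sum_nonneg)

lemma dotf_self_zero: "dotf n x x = 0 \<Longrightarrow> i < n \<Longrightarrow> x i = 0"
  unfolding dotf_def by (subst (asm) sum_nonneg_eq_0_iff) auto

lemma dotf_lincomb_left:
  assumes "\<And>i. i < n \<Longrightarrow> x i = (\<Sum>l<r. g l * u l i)"
  shows "dotf n x y = (\<Sum>l<r. g l * dotf n (u l) y)"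
proof -
  have "dotf n x y = (\<Sum>i<n. \<Sum>l<r. g l * u l i * y i)"
    unfolding dotf_def using assms by (auto simp: sum_distrib_right intro!: sum.cong)
  also have "\<dots> = (\<Sum>l<r. \<Sum>i<n. g l * u l i * y i)" by (rule sum.swap)
  also have "\<dots> = (\<Sum>l<r. g l * dotf n (u l) y)"
    unfolding dotf_def by (auto simp: sum_distrib_left mult.assoc intro!: sum.cong)
  finally show ?thesis .
qed

lemma dotf_lincomb_right:
  assumes "\<And>i. i < n \<Longrightarrow> x i = (\<Sum>l<r. g l * u l i)"
  shows "dotf n y x = (\<Sum>l<r. g l * dotf n y (u l))"
  unfolding dotf_comm[of n y] by (rule dotf_lincomb_left[OF assms])

lemma mvf_lincomb:
  assumes "\<And>i. i < n \<Longrightarrow> x i = (\<Sum>l<r. g l * u l i)"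
  shows "mvf n A x i = (\<Sum>l<r. g l * mvf n A (u l) i)"
proof -
  have "mvf n A x i = (\<Sum>j<n. \<Sum>l<r. A $$ (i,j) * (g l * u l j))"
    unfolding mvf_def using assms by (auto simp: sum_distrib_left intro!: sum.cong)
  also have "\<dots> = (\<Sum>l<r. \<Sum>j<n. A $$ (i,j) * (g l * u l j))" by (rule sum.swap)
  also have "\<dots> = (\<Sum>l<r. g l * mvf n A (u l) i)"
    unfolding mvf_def by (auto simp: sum_distrib_left mult.left_commute intro!: sum.cong)
  finally show ?thesis .
qed

lemma dotf_diff_right: "dotf n x (\<lambda>i. y i - z i) = dotf n x y - dotf n x z"
  unfolding dotf_def by (simp add: right_diff_distrib sum_subtractf)

lemma dotf_zero_left: "(\<And>i. i < n \<Longrightarrow> x i = 0) \<Longrightarrow> dotf n x y = 0"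
  unfolding dotf_def by auto

lemma mvf_diff: "mvf n A (\<lambda>i. y i - z i) i = mvf n A y i - mvf n A z i"
  unfolding mvf_def by (simp add: right_diff_distrib sum_subtractf)

lemma sum_single_nz:
  fixes m r :: nat
  assumes "m < r" "\<And>l. l < r \<Longrightarrow> l \<noteq> m \<Longrightarrow> f l = (0::real)"
  shows "(\<Sum>l<r. f l) = f m"
proof -
  have "(\<Sum>l<r. f l) = f m + (\<Sum>l\<in>{..<r} - {m}. f l)"
    using assms(1) by (intro sum.remove) auto
  also have "(\<Sum>l\<in>{..<r} - {m}. f l) = 0" using assms(2) by (intro sum.neutral) auto
  finally show ?thesis by simp
qed

lemma flag_basis:
  fixes r :: nat
  assumes sym: "\<And>i j. i < n \<Longrightarrow> j < n \<Longrightarrow> A $$ (i,j) = A $$ (j,i)"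
  shows "(\<And>j. j < r \<Longrightarrow> \<exists>\<gamma>. \<forall>i<n. mvf n A (p j) i = t j * p j i + (\<Sum>l<j. \<gamma> l * p l i))
    \<Longrightarrow> \<exists>u. (\<forall>j<r. \<forall>l<r. l \<noteq> j \<longrightarrow> dotf n (u l) (u j) = 0)
        \<and> (\<forall>j<r. \<forall>i<n. mvf n A (u j) i = t j * u j i)
        \<and> (\<forall>j<r. \<exists>\<beta>. \<forall>i<n. p j i = (\<Sum>l<r. \<beta> l * u l i))"
proof (induction r)
  case 0 show ?case by auto
next
  case (Suc r)
  have "\<exists>u. (\<forall>j<r. \<forall>l<r. l \<noteq> j \<longrightarrow> dotf n (u l) (u j) = 0)
        \<and> (\<forall>j<r. \<forall>i<n. mvf n A (u j) i = t j * u j i)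
        \<and> (\<forall>j<r. \<exists>\<beta>. \<forall>i<n. p j i = (\<Sum>l<r. \<beta> l * u l i))"
  proof (rule Suc.IH)
    fix j assume "j < r"
    then have "j < Suc r" by simp
    then show "\<exists>\<gamma>. \<forall>i<n. mvf n A (p j) i = t j * p j i + (\<Sum>l<j. \<gamma> l * p l i)"
      by (rule Suc.prems)
  qed
  then obtain u where
    orth: "\<forall>j<r. \<forall>l<r. l \<noteq> j \<longrightarrow> dotf n (u l) (u j) = 0" and
    eig: "\<forall>j<r. \<forall>i<n. mvf n A (u j) i = t j * u j i" and
    span: "\<forall>j<r. \<exists>\<beta>. \<forall>i<n. p j i = (\<Sum>l<r. \<beta> l * u l i)" by blast
  from span have "\<forall>j\<in>{..<r}. \<exists>\<beta>. \<forall>i<n. p j i = (\<Sum>l<r. \<beta> l * u l i)" by blast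
  from bchoice[OF this] obtain B where B0: "\<forall>j\<in>{..<r}. \<forall>i<n. p j i = (\<Sum>l<r. B j l * u l i)"
    by blast
  have B: "p j i = (\<Sum>l<r. B j l * u l i)" if "j < r" "i < n" for j i
    using B0 that by blast
  have "r < Suc r" by simp
  from Suc.prems[OF this] obtain \<gamma> where \<gamma>0: "\<forall>i<n. mvf n A (p r) i = t r * p r i + (\<Sum>l<r. \<gamma> l * p l i)"
    by blast
  have \<gamma>: "mvf n A (p r) i = t r * p r i + (\<Sum>l<r. \<gamma> l * p l i)" if "i < n" for i
    using \<gamma>0 that by blast
  define co where "co l = dotf n (p r) (u l) / dotf n (u l) (u l)" for l
  define v where "v i = p r i - (\<Sum>l<r. co l * u l i)" for i
  have vi: "v i = p r i - (\<Sum>l<r. co l * u l i)" for i by (simp add: v_def)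
  have ov: "dotf n (u m) v = 0" if m: "m < r" for m
  proof -
    have "dotf n (u m) v = dotf n (u m) (p r) - dotf n (u m) (\<lambda>i. \<Sum>l<r. co l * u l i)"
      unfolding v_def by (rule dotf_diff_right)
    also have "dotf n (u m) (\<lambda>i. \<Sum>l<r. co l * u l i) = (\<Sum>l<r. co l * dotf n (u m) (u l))"
      by (rule dotf_lincomb_right) simp
    also have "\<dots> = co m * dotf n (u m) (u m)"
      using orth m by (intro sum_single_nz) auto
    also have "dotf n (u m) (p r) - co m * dotf n (u m) (u m) = 0"
    proof (cases "dotf n (u m) (u m) = 0")
      case True
      then have "dotf n (u m) (p r) = 0" using dotf_self_zero[OF True] by (intro dotf_zero_left) auto
      then show ?thesis using True by simp
    next
      case False
      then show ?thesis unfolding co_def by (simp add: dotf_comm)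
    qed
    finally show ?thesis .
  qed
  define e where "e i = mvf n A v i - t r * v i" for i
  define \<delta> where "\<delta> m = (\<Sum>l<r. \<gamma> l * B l m) - co m * t m + t r * co m" for m
  have e_comb: "e i = (\<Sum>m<r. \<delta> m * u m i)" if i: "i < n" for i
  proof -
    have "mvf n A v i = mvf n A (p r) i - mvf n A (\<lambda>i. \<Sum>l<r. co l * u l i) i"
      unfolding v_def by (rule mvf_diff)
    also have "mvf n A (\<lambda>i. \<Sum>l<r. co l * u l i) i = (\<Sum>l<r. co l * mvf n A (u l) i)"
      by (rule mvf_lincomb) simp
    also have "\<dots> = (\<Sum>l<r. co l * t l * u l i)" using eig i by (auto intro!: sum.cong)
    also have "mvf n A (p r) i = t r * p r i + (\<Sum>l<r. \<gamma> l * p l i)" using \<gamma> i by simp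
    also have "(\<Sum>l<r. \<gamma> l * p l i) = (\<Sum>l<r. \<gamma> l * (\<Sum>m<r. B l m * u m i))"
      using B i by (auto intro!: sum.cong)
    also have "\<dots> = (\<Sum>l<r. \<Sum>m<r. \<gamma> l * B l m * u m i)"
      by (simp add: sum_distrib_left mult.assoc)
    also have "\<dots> = (\<Sum>m<r. \<Sum>l<r. \<gamma> l * B l m * u m i)"
      by (rule sum.swap)
    also have "\<dots> = (\<Sum>m<r. (\<Sum>l<r. \<gamma> l * B l m) * u m i)"
      by (simp add: sum_distrib_right)
    finally have "mvf n A v i = t r * p r i + (\<Sum>m<r. (\<Sum>l<r. \<gamma> l * B l m) * u m i) - (\<Sum>l<r. co l * t l * u l i)" .
    then have "e i = (\<Sum>m<r. (\<Sum>l<r. \<gamma> l * B l m) * u m i) - (\<Sum>l<r. co l * t l * u l i) + t r * (\<Sum>l<r. co l * u l i)"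
      unfolding e_def vi by (simp add: right_diff_distrib)
    also have "\<dots> = (\<Sum>m<r. (\<Sum>l<r. \<gamma> l * B l m) * u m i - co m * t m * u m i + t r * (co m * u m i))"
      by (simp add: sum.distrib sum_subtractf sum_distrib_left)
    also have "\<dots> = (\<Sum>m<r. \<delta> m * u m i)"
      unfolding \<delta>_def by (rule sum.cong) (simp_all add: algebra_simps)
    finally show ?thesis .
  qed
  have dz: "\<delta> m * u m i = 0" if m: "m < r" and i: "i < n" for m i
  proof -
    have "dotf n (u m) e = dotf n (u m) (mvf n A v) - dotf n (u m) (\<lambda>i. t r * v i)"
      unfolding e_def by (rule dotf_diff_right)
    also have "dotf n (u m) (mvf n A v) = dotf n (mvf n A (u m)) v" by (rule dotf_sym_mvf[OF sym])
    also have "\<dots> = dotf n (\<lambda>i. t m * u m i) v" using eig m by (intro dotf_cong) auto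
    also have "\<dots> = t m * dotf n (u m) v" unfolding dotf_def by (simp add: sum_distrib_left mult.assoc)
    also have "dotf n (u m) (\<lambda>i. t r * v i) = t r * dotf n (u m) v" unfolding dotf_def by (simp add: sum_distrib_left mult.left_commute)
    finally have "dotf n (u m) e = 0" using ov[OF m] by simp
    moreover have "dotf n (u m) e = (\<Sum>l<r. \<delta> l * dotf n (u m) (u l))"
      by (rule dotf_lincomb_right) (rule e_comb)
    moreover have "\<dots> = \<delta> m * dotf n (u m) (u m)"
      using orth m by (intro sum_single_nz) auto
    ultimately have "\<delta> m * dotf n (u m) (u m) = 0" by simp
    then show ?thesis using dotf_self_zero[of n "u m" i] i by auto
  qed
  have ev: "mvf n A v i = t r * v i" if i: "i < n" for i
  proof -
    have "(\<Sum>m<r. \<delta> m * u m i) = 0" using dz i by (intro sum.neutral) auto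
    then show ?thesis using e_comb[OF i] unfolding e_def by simp
  qed
  define u' where "u' = u(r := v)"
  show ?case
  proof (intro exI[of _ u'] conjI allI impI)
    fix j l assume j: "j < Suc r" and l: "l < Suc r" and lj: "l \<noteq> j"
    show "dotf n (u' l) (u' j) = 0"
    proof (cases "j = r")
      case True
      then have lr: "l < r" using l lj by simp
      have "u' j = v" "u' l = u l" using True lr unfolding u'_def by auto
      then show ?thesis using ov[OF lr] by simp
    next
      case False
      show ?thesis
      proof (cases "l = r")
        case True
        have "dotf n (u' l) (u' j) = dotf n (u' j) (u' l)" by (rule dotf_comm)
        moreover have jr: "j < r" using j False by simp
        moreover have "u' l = v" "u' j = u j" using True jr unfolding u'_def by auto
        ultimately show ?thesis using ov[OF jr] by simp
      next
        case False
        have "u' l = u l" "u' j = u j" using False \<open>j \<noteq> r\<close> unfolding u'_def by auto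
        moreover have "j < r" "l < r" using False \<open>j \<noteq> r\<close> j l by auto
        ultimately show ?thesis using lj orth by simp
      qed
    qed
  next
    fix j i assume j: "j < Suc r" and i: "i < n"
    show "mvf n A (u' j) i = t j * u' j i"
    proof (cases "j = r")
      case True
      then show ?thesis using ev i unfolding u'_def by simp
    next
      case False
      then have "j < r" using j by simp
      then show ?thesis using eig i False unfolding u'_def by simp
    qed
  next
    fix j assume j: "j < Suc r"
    show "\<exists>\<beta>. \<forall>i<n. p j i = (\<Sum>l<Suc r. \<beta> l * u' l i)"
    proof (cases "j = r")
      case True
      show ?thesis
      proof (intro exI[of _ "co(r := 1)"] allI impI)
        fix i assume "i < n"
        have "(\<Sum>l<Suc r. (co(r := 1)) l * u' l i) = (\<Sum>l<r. co l * u l i) + v i"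
          unfolding u'_def by (simp add: lessThan_Suc)
        then show "p j i = (\<Sum>l<Suc r. (co(r := 1)) l * u' l i)"
          using True unfolding v_def by simp
      qed
    next
      case False
      with j have jr: "j < r" by simp
      show ?thesis
      proof (intro exI[of _ "(B j)(r := 0)"] allI impI)
        fix i assume i: "i < n"
        have "(\<Sum>l<Suc r. ((B j)(r := 0)) l * u' l i) = (\<Sum>l<r. B j l * u l i)"
          unfolding u'_def by (simp add: lessThan_Suc)
        then show "p j i = (\<Sum>l<Suc r. ((B j)(r := 0)) l * u' l i)"
          using B[OF jr i] by simp
      qed
    qed
  qed
qed

lemma flag_form:
  fixes r :: nat
  assumes sym: "\<And>i j. i < n \<Longrightarrow> j < n \<Longrightarrow> A $$ (i,j) = A $$ (j,i)"
  and H: "\<And>j. j < r \<Longrightarrow> \<exists>\<gamma>. \<forall>i<n. mvf n A (p j) i = t j * p j i + (\<Sum>l<j. \<gamma> l * p l i)"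
  and tc: "\<And>j. j < r \<Longrightarrow> c \<le> t j"
  and x: "\<And>i. i < n \<Longrightarrow> x i = (\<Sum>j<r. a j * p j i)"
  shows "c * dotf n x x \<le> dotf n x (mvf n A x)"
proof -
  from flag_basis[OF sym H] obtain u where
    orth: "\<forall>j<r. \<forall>l<r. l \<noteq> j \<longrightarrow> dotf n (u l) (u j) = 0" and
    eig: "\<forall>j<r. \<forall>i<n. mvf n A (u j) i = t j * u j i" and
    span: "\<forall>j<r. \<exists>\<beta>. \<forall>i<n. p j i = (\<Sum>l<r. \<beta> l * u l i)" by blast
  from span have "\<forall>j\<in>{..<r}. \<exists>\<beta>. \<forall>i<n. p j i = (\<Sum>l<r. \<beta> l * u l i)" by blast
  from bchoice[OF this] obtain B where B0: "\<forall>j\<in>{..<r}. \<forall>i<n. p j i = (\<Sum>l<r. B j l * u l i)"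
    by blast
  define g where "g l = (\<Sum>j<r. a j * B j l)" for l
  define D where "D l = dotf n (u l) (u l)" for l
  have xg: "x i = (\<Sum>l<r. g l * u l i)" if i: "i < n" for i
  proof -
    have "x i = (\<Sum>j<r. a j * (\<Sum>l<r. B j l * u l i))" using x[OF i] B0 i by auto
    also have "\<dots> = (\<Sum>j<r. \<Sum>l<r. a j * B j l * u l i)" by (simp add: sum_distrib_left mult.assoc)
    also have "\<dots> = (\<Sum>l<r. \<Sum>j<r. a j * B j l * u l i)" by (rule sum.swap)
    also have "\<dots> = (\<Sum>l<r. g l * u l i)" unfolding g_def by (simp add: sum_distrib_right)
    finally show ?thesis .
  qed
  have Ax: "mvf n A x i = (\<Sum>l<r. (g l * t l) * u l i)" if i: "i < n" for i
  proof -
    have "mvf n A x i = (\<Sum>l<r. g l * mvf n A (u l) i)" by (rule mvf_lincomb) (rule xg)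
    also have "\<dots> = (\<Sum>l<r. (g l * t l) * u l i)" using eig i by (auto intro!: sum.cong)
    finally show ?thesis .
  qed
  have q1: "dotf n x (mvf n A x) = (\<Sum>l<r. g l * (g l * t l * D l))"
  proof -
    have "dotf n x (mvf n A x) = (\<Sum>l<r. g l * dotf n (u l) (mvf n A x))"
      by (rule dotf_lincomb_left) (rule xg)
    also have "\<dots> = (\<Sum>l<r. g l * (g l * t l * D l))"
    proof (rule sum.cong)
      fix l assume "l \<in> {..<r}"
      then have l: "l < r" by simp
      have "dotf n (u l) (mvf n A x) = (\<Sum>m<r. (g m * t m) * dotf n (u l) (u m))"
        by (rule dotf_lincomb_right) (rule Ax)
      also have "\<dots> = g l * t l * D l" unfolding D_def
        using orth l by (intro sum_single_nz) auto
      finally show "g l * dotf n (u l) (mvf n A x) = g l * (g l * t l * D l)" by simp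
    qed simp
    finally show ?thesis .
  qed
  have q2: "dotf n x x = (\<Sum>l<r. g l * (g l * D l))"
  proof -
    have "dotf n x x = (\<Sum>l<r. g l * dotf n (u l) x)"
      by (rule dotf_lincomb_left) (rule xg)
    also have "\<dots> = (\<Sum>l<r. g l * (g l * D l))"
    proof (rule sum.cong)
      fix l assume "l \<in> {..<r}"
      then have l: "l < r" by simp
      have "dotf n (u l) x = (\<Sum>m<r. g m * dotf n (u l) (u m))"
        by (rule dotf_lincomb_right) (rule xg)
      also have "\<dots> = g l * D l" unfolding D_def
        using orth l by (intro sum_single_nz) auto
      finally show "g l * dotf n (u l) x = g l * (g l * D l)" by simp
    qed simp
    finally show ?thesis .
  qed
  have "c * dotf n x x = (\<Sum>l<r. c * (g l * g l * D l))"
    unfolding q2 by (simp add: sum_distrib_left mult.assoc)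
  also have "\<dots> \<le> (\<Sum>l<r. t l * (g l * g l * D l))"
  proof (rule sum_mono)
    fix l assume "l \<in> {..<r}"
    then have "c \<le> t l" using tc by simp
    moreover have "0 \<le> g l * g l * D l" unfolding D_def using dotf_self_nonneg by simp
    ultimately show "c * (g l * g l * D l) \<le> t l * (g l * g l * D l)" by (rule mult_right_mono)
  qed
  also have "\<dots> = dotf n x (mvf n A x)" unfolding q1 by (auto intro!: sum.cong simp: ac_simps)
  finally show ?thesis .
qed




lemma map_poly_of_real_mult:
  "map_poly (of_real :: real \<Rightarrow> complex) (p * q) = map_poly of_real p * map_poly of_real q"
  by (rule poly_eqI) (simp add: coeff_mult coeff_map_poly)

lemma map_poly_of_real_inj:
  "map_poly (of_real :: real \<Rightarrow> complex) p = map_poly of_real q \<Longrightarrow> p = q"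
  by (metis (no_types, lifting) coeff_map_poly of_real_0 of_real_eq_iff poly_eqI)

lemma real_sym_splits:
  fixes A :: "real mat"
  assumes A: "A \<in> carrier_mat n n"
  and sym: "\<And>i j. i < n \<Longrightarrow> j < n \<Longrightarrow> A $$ (i,j) = A $$ (j,i)"
  shows "\<exists>es. char_poly A = (\<Prod>e\<leftarrow>es. [:-e, 1:])"
proof -
  define C where "C = map_mat (of_real :: real \<Rightarrow> complex) A"
  have C: "C \<in> carrier_mat n n" using A unfolding C_def by simp
  obtain as where cC: "char_poly C = (\<Prod>a\<leftarrow>as. [:- a, 1:])"
    using char_poly_factorized[OF C] by blast
  have re: "Im a = 0" if a: "a \<in> set as" for a
  proof -
    have "poly (char_poly C) a = 0" unfolding cC using a by (rule linear_poly_root)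
    then have "eigenvalue C a" using eigenvalue_root_char_poly[OF C] by simp
    then obtain v where ev: "eigenvector C v a" unfolding eigenvalue_def by blast
    then have v: "v \<in> carrier_vec n" and v0: "v \<noteq> 0\<^sub>v n" and Cv: "C *\<^sub>v v = a \<cdot>\<^sub>v v"
      using C unfolding eigenvector_def by auto
    have comp: "(\<Sum>j<n. of_real (A $$ (i,j)) * v $ j) = a * v $ i" if i: "i < n" for i
    proof -
      have "(C *\<^sub>v v) $ i = (a \<cdot>\<^sub>v v) $ i" using Cv by simp
      then show ?thesis using i C A v unfolding C_def
        by (auto simp: scalar_prod_def atLeast0LessThan)
    qed
    define s where "s = (\<Sum>i<n. cnj (v $ i) * (\<Sum>j<n. of_real (A $$ (i,j)) * v $ j))"
    define N where "N = (\<Sum>i<n. cnj (v $ i) * v $ i)"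
    have sN: "s = a * N" unfolding s_def N_def using comp
      by (simp add: sum_distrib_left mult.left_commute)
    have "cnj s = (\<Sum>i<n. \<Sum>j<n. v $ i * (of_real (A $$ (i,j)) * cnj (v $ j)))"
      unfolding s_def by (simp add: sum_distrib_left)
    also have "\<dots> = (\<Sum>j<n. \<Sum>i<n. v $ i * (of_real (A $$ (i,j)) * cnj (v $ j)))"
      by (rule sum.swap)
    also have "\<dots> = s" unfolding s_def
      by (auto simp: sum_distrib_left sym ac_simps intro!: sum.cong)
    finally have "cnj s = s" .
    then have ims: "Im s = 0" by (metis Reals_cnj_iff complex_is_Real_iff)
    have imN: "Im N = 0" unfolding N_def by (simp add: Im_sum)
    obtain i where i: "i < n" and vi: "v $ i \<noteq> 0"
      using v v0 by (metis eq_vecI index_zero_vec(1,2) carrier_vecD)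
    have cc: "Re (cnj z * z) = (cmod z)^2" for z :: complex
      by (metis Re_complex_of_real complex_norm_square mult.commute of_real_power)
    have "Re N = (\<Sum>j<n. (cmod (v $ j))^2)" unfolding N_def
      by (simp only: Re_sum cc)
    moreover have "(\<Sum>j<n. (cmod (v $ j))^2) > 0"
    proof -
      have "(\<Sum>j<n. (cmod (v $ j))^2) \<ge> (cmod (v $ i))^2"
        using i by (intro member_le_sum) auto
      moreover have "(cmod (v $ i))^2 > 0" using vi by simp
      ultimately show ?thesis by linarith
    qed
    ultimately have reN: "Re N > 0" by simp
    have "Im s = Im a * Re N + Re a * Im N" unfolding sN by simp
    then have "Im a * Re N = 0" using ims imN by simp
    then show ?thesis using reN by simp
  qed
  define es where "es = map Re as"
  have "map_poly (of_real :: real \<Rightarrow> complex) (\<Prod>e\<leftarrow>es. [:-e, 1:]) = (\<Prod>a\<leftarrow>as. [:- a, 1:])"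
    unfolding es_def using re
  proof (induction as)
    case Nil then show ?case by simp
  next
    case (Cons a as)
    have "of_real (Re a) = a" using Cons.prems by (simp add: complex_eq_iff)
    then have "map_poly (of_real :: real \<Rightarrow> complex) [:-Re a, 1:] = [:-a, 1:]" by simp
    have "map_poly (of_real :: real \<Rightarrow> complex) (\<Prod>e\<leftarrow>map Re (a # as). [:-e, 1:])
      = map_poly of_real [:-Re a, 1:] * map_poly of_real (\<Prod>e\<leftarrow>map Re as. [:-e, 1:])"
      by (simp only: list.map prod_list.Cons map_poly_of_real_mult)
    also have "\<dots> = [:-a, 1:] * (\<Prod>a\<leftarrow>as. [:- a, 1:])"
      using Cons \<open>map_poly of_real [:-Re a, 1:] = [:-a, 1:]\<close> by simp
    finally show ?case by simp
  qed
  also have "\<dots> = map_poly of_real (char_poly A)"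
  proof -
    have "char_poly C = map_poly of_real (char_poly A)"
      unfolding C_def by (rule of_real_hom.char_poly_hom[OF A])
    then show ?thesis using cC by simp
  qed
  finally have "map_poly of_real (\<Prod>e\<leftarrow>es. [:-e, 1:]) = map_poly (of_real :: real \<Rightarrow> complex) (char_poly A)" .
  then have "char_poly A = (\<Prod>e\<leftarrow>es. [:-e, 1:])"
    using map_poly_of_real_inj by metis
  then show ?thesis by blast
qed




lemma degree_lin_prod: "degree (\<Prod>e\<leftarrow>es. [:-e, 1::real:]) = length es"
proof (induction es)
  case Nil then show ?case by simp
next
  case (Cons a es)
  have nz: "(\<Prod>e\<leftarrow>es. [:-e, 1::real:]) \<noteq> 0"
    by (auto simp: prod_list_zero_iff)
  have "degree ([:-a, 1::real:] * (\<Prod>e\<leftarrow>es. [:-e, 1::real:])) = degree [:-a, 1::real:] + degree (\<Prod>e\<leftarrow>es. [:-e, 1::real:])"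
    by (rule degree_mult_eq) (use nz in auto)
  then have "degree (\<Prod>e\<leftarrow>a # es. [:-e, 1::real:]) = 1 + length es"
    using Cons by (simp only: list.map prod_list.Cons) simp
  then show ?case by simp
qed

lemma mat_mult_entry:
  assumes "A \<in> carrier_mat n n" "B \<in> carrier_mat n n" "i < n" "j < n"
  shows "(A * B) $$ (i,j) = (\<Sum>k<n. A $$ (i,k) * B $$ (k,j))"
  using assms by (simp add: scalar_prod_def atLeast0LessThan)

lemma inj_from_left_inverse:
  fixes P Q :: "real mat"
  assumes P: "P \<in> carrier_mat n n" and Q: "Q \<in> carrier_mat n n" and QP: "Q * P = 1\<^sub>m n"
  and z: "\<And>i. i < n \<Longrightarrow> (\<Sum>k<n. P $$ (i,k) * a k) = 0"
  and q: "q < n"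
  shows "a q = 0"
proof -
  have "0 = (\<Sum>i<n. Q $$ (q,i) * (\<Sum>k<n. P $$ (i,k) * a k))" using z by simp
  also have "\<dots> = (\<Sum>i<n. \<Sum>k<n. Q $$ (q,i) * P $$ (i,k) * a k)"
    by (simp add: sum_distrib_left mult.assoc)
  also have "\<dots> = (\<Sum>k<n. \<Sum>i<n. Q $$ (q,i) * P $$ (i,k) * a k)" by (rule sum.swap)
  also have "\<dots> = (\<Sum>k<n. (Q * P) $$ (q,k) * a k)"
    using mat_mult_entry[OF Q P q] by (simp add: sum_distrib_right)
  also have "\<dots> = (\<Sum>k<n. (if q = k then a k else 0))"
    using QP q by (intro sum.cong) auto
  also have "\<dots> = a q" using q by simp
  finally show ?thesis by simp
qed

lemma exists_kernel:
  fixes F :: "nat \<Rightarrow> nat \<Rightarrow> real"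
  shows "\<exists>b. (\<exists>q<Suc n. b q \<noteq> 0) \<and> (\<forall>i<n. (\<Sum>q<Suc n. F i q * b q) = 0)"
proof -
  define M where "M = mat (Suc n) (Suc n) (\<lambda>(i,q). if i < n then F i q else 0)"
  have M: "M \<in> carrier_mat (Suc n) (Suc n)" unfolding M_def by simp
  have "det M = (\<Sum>j<Suc n. M $$ (n,j) * cofactor M n j)"
    by (rule laplace_expansion_row[OF M]) simp
  also have "\<dots> = 0" unfolding M_def by simp
  finally have "det M = 0" .
  then obtain v where v: "v \<in> carrier_vec (Suc n)" and v0: "v \<noteq> 0\<^sub>v (Suc n)" and Mv: "M *\<^sub>v v = 0\<^sub>v (Suc n)"
    using det_0_iff_vec_prod_zero_field[OF M] by blast
  have "\<exists>q<Suc n. v $ q \<noteq> 0"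
  proof (rule ccontr)
    assume "\<not> ?thesis"
    then have "v = 0\<^sub>v (Suc n)" using v by (intro eq_vecI) auto
    then show False using v0 by simp
  qed
  moreover have "(\<Sum>q<Suc n. F i q * v $ q) = 0" if i: "i < n" for i
  proof -
    have "(M *\<^sub>v v) $ i = 0" using Mv i by simp
    then show ?thesis using i v unfolding M_def by (simp add: scalar_prod_def atLeast0LessThan)
  qed
  ultimately show ?thesis by (intro exI[of _ "\<lambda>q. v $ q"]) auto
qed

lemma sum_split_add: fixes r m :: nat shows "(\<Sum>q<r + m. f q) = (\<Sum>q<r. f q) + (\<Sum>l<m. f (r + l))"
  by (induction m) (simp_all add: add.assoc)




lemma mvf_neg: "mvf n A (\<lambda>i. - z i) i = - mvf n A z i"
  unfolding mvf_def by (simp add: sum_negf)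

lemma eig_bound:
  fixes A :: "real mat" and Y :: "nat \<Rightarrow> nat \<Rightarrow> real" and m n :: nat and c :: real
  assumes A: "A \<in> carrier_mat n n"
  and sym: "\<And>i j. i < n \<Longrightarrow> j < n \<Longrightarrow> A $$ (i,j) = A $$ (j,i)"
  and m0: "0 < m" and mn: "m \<le> n"
  and neg: "\<And>b. (\<exists>l<m. b l \<noteq> 0) \<Longrightarrow>
     dotf n (\<lambda>i. \<Sum>l<m. Y i l * b l) (mvf n A (\<lambda>i. \<Sum>l<m. Y i l * b l))
       < c * dotf n (\<lambda>i. \<Sum>l<m. Y i l * b l) (\<lambda>i. \<Sum>l<m. Y i l * b l)"
  shows "eigenvalues_desc A ! (n - m) < c"
proof (rule ccontr)
  assume "\<not> eigenvalues_desc A ! (n - m) < c"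
  then have cge: "c \<le> eigenvalues_desc A ! (n - m)" by simp
  define es0 where "es0 = (SOME es. char_poly A = (\<Prod>e\<leftarrow>es. [:-e, 1:]))"
  have cp0: "char_poly A = (\<Prod>e\<leftarrow>es0. [:-e, 1:])"
    unfolding es0_def using real_sym_splits[OF A sym] by (rule someI_ex)
  define ds where "ds = rev (sort es0)"
  have ed: "eigenvalues_desc A = ds" unfolding eigenvalues_desc_def ds_def es0_def ..
  have "length es0 = n" using degree_lin_prod[of es0] degree_monic_char_poly[OF A] cp0 by simp
  then have lds: "length ds = n" unfolding ds_def by simp
  have "mset (map (\<lambda>e. [:-e, 1:]) ds) = mset (map (\<lambda>e. [:-e, 1::real:]) es0)"
    unfolding ds_def by simp
  then have cp: "char_poly A = (\<Prod>e\<leftarrow>ds. [:-e, 1:])" unfolding cp0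
    by (metis prod_mset_prod_list)
  obtain B P Q where sd: "schur_decomposition A ds = (B, P, Q)" by (cases "schur_decomposition A ds") auto
  from schur_decomposition[OF A cp sd] have sw: "similar_mat_wit A B P Q"
    and ut: "upper_triangular B" and dg: "diag_mat B = ds" by auto
  from sw A have B: "B \<in> carrier_mat n n" and P: "P \<in> carrier_mat n n" and Q: "Q \<in> carrier_mat n n"
    and PQ: "P * Q = 1\<^sub>m n" and QP: "Q * P = 1\<^sub>m n" and APBQ: "A = P * B * Q"
    unfolding similar_mat_wit_def Let_def by auto
  have AP: "A * P = P * B"
  proof -
    have "A * P = P * B * Q * P" using APBQ by simp
    also have "\<dots> = P * B * (Q * P)" using P B Q by (simp add: assoc_mult_mat[of _ n n _ n _ n])
    also have "\<dots> = P * B" using QP P B by simp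
    finally show ?thesis .
  qed
  define p where "p j i = P $$ (i, j)" for j i
  define t where "t j = B $$ (j, j)" for j
  have tds: "t j = ds ! j" if "j < n" for j
    unfolding t_def dg[symmetric] diag_mat_def using that B by simp
  define r where "r = n - m + 1"
  have rn: "r \<le> n" and rm: "r + m = Suc n" using m0 mn unfolding r_def by auto
  have H: "\<exists>\<gamma>. \<forall>i<n. mvf n A (p j) i = t j * p j i + (\<Sum>l<j. \<gamma> l * p l i)" if j: "j < r" for j
  proof (intro exI[of _ "\<lambda>l. B $$ (l, j)"] allI impI)
    fix i assume i: "i < n"
    have jn: "j < n" using j rn by simp
    have "mvf n A (p j) i = (A * P) $$ (i, j)"
      unfolding mvf_def p_def using mat_mult_entry[OF A P i jn] by simp
    also have "\<dots> = (\<Sum>l<n. P $$ (i,l) * B $$ (l,j))" unfolding AP using mat_mult_entry[OF P B i jn] .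
    also have "\<dots> = (\<Sum>l<Suc j. P $$ (i,l) * B $$ (l,j))"
    proof -
      have nn: "n = Suc j + (n - Suc j)" using jn by simp
      have "(\<Sum>l<n. P $$ (i,l) * B $$ (l,j)) = (\<Sum>l<Suc j + (n - Suc j). P $$ (i,l) * B $$ (l,j))"
        using nn by simp
      also have "\<dots> = (\<Sum>l<Suc j. P $$ (i,l) * B $$ (l,j)) + (\<Sum>l<n - Suc j. P $$ (i,Suc j + l) * B $$ (Suc j + l,j))"
        by (rule sum_split_add)
      also have "(\<Sum>l<n - Suc j. P $$ (i,Suc j + l) * B $$ (Suc j + l,j)) = 0"
        using ut B by (intro sum.neutral) (auto simp: upper_triangular_def)
      finally show ?thesis by simp
    qed
    also have "\<dots> = t j * p j i + (\<Sum>l<j. B $$ (l, j) * p l i)"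
      unfolding t_def p_def by (simp add: mult.commute)
    finally show "mvf n A (p j) i = t j * p j i + (\<Sum>l<j. B $$ (l, j) * p l i)" .
  qed
  have tc: "c \<le> t j" if j: "j < r" for j
  proof -
    have jn: "j < n" and jm: "j \<le> n - m" using j rn unfolding r_def by auto
    have "sorted (sort es0)" by simp
    have "ds ! (n - m) \<le> ds ! j"
      unfolding ds_def using jm mn m0 \<open>length es0 = n\<close>
      by (auto simp: rev_nth intro!: sorted_nth_mono)
    then show ?thesis using cge ed tds[OF jn] by simp
  qed
  define F where "F i q = (if q < r then P $$ (i, q) else Y i (q - r))" for i q
  obtain b where bnz: "\<exists>q<Suc n. b q \<noteq> 0" and bk: "\<forall>i<n. (\<Sum>q<Suc n. F i q * b q) = 0"
    using exists_kernel[of n F] by blast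
  define x where "x i = (\<Sum>q<r. b q * p q i)" for i
  define z where "z i = (\<Sum>l<m. Y i l * b (r + l))" for i
  have xz: "x i = - z i" if i: "i < n" for i
  proof -
    have "0 = (\<Sum>q<r + m. F i q * b q)" using bk i rm by simp
    also have "\<dots> = (\<Sum>q<r. F i q * b q) + (\<Sum>l<m. F i (r + l) * b (r + l))" by (rule sum_split_add)
    also have "(\<Sum>q<r. F i q * b q) = x i" unfolding x_def F_def p_def by (auto intro!: sum.cong)
    also have "(\<Sum>l<m. F i (r + l) * b (r + l)) = z i" unfolding z_def F_def by simp
    finally show ?thesis by simp
  qed
  show False
  proof (cases "\<exists>l<m. b (r + l) \<noteq> 0")
    case True
    have zneg: "dotf n z (mvf n A z) < c * dotf n z z"
      using neg[of "\<lambda>l. b (r + l)", OF True] unfolding z_def .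
    have "c * dotf n x x \<le> dotf n x (mvf n A x)"
    proof (rule flag_form[OF sym H tc])
      fix i assume "i < n"
      show "x i = (\<Sum>j<r. b j * p j i)" by (simp add: x_def)
    qed
    moreover have "dotf n x x = dotf n z z"
      unfolding dotf_def using xz by (auto intro!: sum.cong)
    moreover have "dotf n x (mvf n A x) = dotf n z (mvf n A z)"
    proof -
      have "dotf n x (mvf n A x) = dotf n (\<lambda>i. - z i) (mvf n A (\<lambda>i. - z i))"
        using xz by (intro dotf_cong mvf_cong) auto
      also have "\<dots> = dotf n z (mvf n A z)" unfolding dotf_def mvf_neg by simp
      finally show ?thesis .
    qed
    ultimately show False using zneg by simp
  next
    case False
    then have zz: "z i = 0" for i unfolding z_def by simp
    obtain q where q: "q < Suc n" "b q \<noteq> 0" using bnz by blast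
    have qr: "q < r"
    proof (rule ccontr)
      assume "\<not> q < r"
      then have "q = r + (q - r)" "q - r < m" using q rm by auto
      then have "b (r + (q - r)) = 0" using False by blast
      then show False using q \<open>q = r + (q - r)\<close> by simp
    qed
    define a where "a k = (if k < r then b k else 0)" for k
    have "a q = 0"
    proof (rule inj_from_left_inverse[OF P Q QP])
      fix i assume i: "i < n"
      have "(\<Sum>k<n. P $$ (i,k) * a k) = (\<Sum>k<r. P $$ (i,k) * b k)"
      proof -
        have nn: "n = r + (n - r)" using rn by simp
        have "(\<Sum>k<n. P $$ (i,k) * a k) = (\<Sum>k<r + (n - r). P $$ (i,k) * a k)"
          using nn by simp
        also have "\<dots> = (\<Sum>k<r. P $$ (i,k) * a k) + (\<Sum>l<n - r. P $$ (i,r + l) * a (r + l))"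
          by (rule sum_split_add)
        finally show ?thesis unfolding a_def by simp
      qed
      also have "\<dots> = x i" unfolding x_def p_def by (simp add: mult.commute)
      also have "\<dots> = 0" using xz[OF i] zz by simp
      finally show "(\<Sum>k<n. P $$ (i,k) * a k) = 0" .
    next
      show "q < n" using qr rn by simp
    qed
    then show False using q qr unfolding a_def by simp
  qed
qed




lemma lap_mvf:
  assumes irr: "\<And>a. \<not> adj a a" and i: "i < n"
  shows "mvf n (laplacian n adj) x i = (\<Sum>j<n. if adj i j then x i - x j else 0)"
proof -
  define C where "C = (\<Sum>k<n. if adj i k then 1 else (0::real))"
  have card: "real (card {k \<in> {0..<n}. adj i k}) = C"
  proof -
    have "real (card {k \<in> {0..<n}. adj i k}) = (\<Sum>k\<in>{k \<in> {0..<n}. adj i k}. 1)" by simp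
    also have "\<dots> = (\<Sum>k\<in>{0..<n}. if adj i k then 1 else 0)" by (rule sum.inter_filter) simp
    finally show ?thesis unfolding C_def atLeast0LessThan .
  qed
  have "mvf n (laplacian n adj) x i = (\<Sum>j<n. (if i = j then C * x i else 0) - (if adj i j then x j else 0))"
    unfolding mvf_def laplacian_def using i irr card by (intro sum.cong) auto
  also have "\<dots> = C * x i - (\<Sum>j<n. if adj i j then x j else 0)"
    using i by (simp add: sum_subtractf)
  also have "\<dots> = (\<Sum>j<n. if adj i j then x i - x j else 0)"
    unfolding C_def by (simp add: sum_distrib_right sum_subtractf[symmetric] if_distrib of_bool_def cong: if_cong)
  finally show ?thesis .
qed

lemma lap_quad:
  assumes irr: "\<And>a. \<not> adj a a" and symm: "\<And>a b. adj a b = adj b a"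
  shows "2 * dotf n x (mvf n (laplacian n adj) x) = (\<Sum>a<n. \<Sum>b<n. if adj a b then (x a - x b)^2 else 0)"
proof -
  define S where "S = (\<Sum>a<n. \<Sum>b<n. if adj a b then x a * x a - x a * x b else 0)"
  have mv: "mvf n (laplacian n adj) x i = (\<Sum>j<n. if adj i j then x i - x j else 0)" if "i < n" for i
    by (rule lap_mvf) (use irr that in auto)
  have d1: "dotf n x (mvf n (laplacian n adj) x) = S"
    unfolding dotf_def S_def using mv
    by (auto simp: sum_distrib_left right_diff_distrib if_distrib intro!: sum.cong cong: if_cong)
  have "S = (\<Sum>b<n. \<Sum>a<n. if adj a b then x a * x a - x a * x b else 0)"
    unfolding S_def by (rule sum.swap)
  also have "\<dots> = (\<Sum>a<n. \<Sum>b<n. if adj a b then x b * x b - x a * x b else 0)"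
  proof (intro sum.cong refl)
    fix a b
    show "(if adj b a then x b * x b - x b * x a else 0) = (if adj a b then x b * x b - x a * x b else 0)"
      using symm[of a b] by (simp add: mult.commute)
  qed
  finally have d2: "S = \<dots>" .
  define T where "T = (\<Sum>a<n. \<Sum>b<n. if adj a b then x b * x b - x a * x b else (0::real))"
  have "2 * S = S + T" using d2 unfolding T_def by simp
  also have "S + T = (\<Sum>a<n. \<Sum>b<n. if adj a b then (x a - x b)^2 else 0)"
    unfolding S_def T_def sum.distrib[symmetric]
    by (intro sum.cong refl) (auto simp: power2_eq_square algebra_simps)
  finally show ?thesis using d1 by simp
qed




lemma sum_if_one: fixes lw k :: nat assumes "lw < k"
  shows "(\<Sum>l<k. if l = lw then A else B) = A + (real k - 1) * (B::real)"
proof -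
  have "(\<Sum>l<k. if l = lw then A else B) = (\<Sum>l<k. B + (if l = lw then A - B else 0))"
    by (intro sum.cong) auto
  also have "\<dots> = real k * B + (A - B)" using assms by (simp add: sum.distrib)
  finally show ?thesis by (simp add: algebra_simps)
qed

lemma sum_if_three: fixes N p q r :: nat
  assumes "p < N" "q < N" "r < N" "p \<noteq> q" "p \<noteq> r" "q \<noteq> r"
  shows "(\<Sum>a<N. if a = p \<or> a = q \<or> a = r then g a else (0::real)) = g p + g q + g r"
proof -
  have "(\<Sum>a<N. if a = p \<or> a = q \<or> a = r then g a else 0)
      = (\<Sum>a<N. (if a = p then g a else 0) + (if a = q then g a else 0) + (if a = r then g a else 0))"
    using assms by (intro sum.cong) auto
  also have "\<dots> = g p + g q + g r" using assms by (simp add: sum.distrib)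
  finally show ?thesis .
qed

lemma sum_if_two: fixes N p q :: nat
  assumes "p < N" "q < N" "p \<noteq> q"
  shows "(\<Sum>a<N. if a = p \<or> a = q then g a else (0::real)) = g p + g q"
proof -
  have "(\<Sum>a<N. if a = p \<or> a = q then g a else 0)
      = (\<Sum>a<N. (if a = p then g a else 0) + (if a = q then g a else 0))"
    using assms by (intro sum.cong) auto
  also have "\<dots> = g p + g q" using assms by (simp add: sum.distrib)
  finally show ?thesis .
qed

lemma dsum_split: fixes p q :: nat
  shows "(\<Sum>a<p+q. \<Sum>c<p+q. h a c) = (\<Sum>a<p. \<Sum>c<p. h a c) + (\<Sum>a<p. \<Sum>l<q. h a (p+l))
    + (\<Sum>l<q. \<Sum>c<p. h (p+l) c) + (\<Sum>l<q. \<Sum>l'<q. h (p+l) (p+l'))"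
  by (simp add: sum_split_add sum.distrib ac_simps)

context
  fixes n d t w i0 :: nat
  assumes d2: "2 \<le> d" and dn: "d + 3 \<le> n" and t2: "2 \<le> t" and td: "t \<le> d"
    and dw: "d < w" and wn: "w < n" and i0: "i0 \<in> {t - 1, t, t + 1}"
begin

definition adjG where "adjG = delete_edge (G_ndt n d t) (pv i0) w"

lemma pv_i0: "pv i0 = t - 2 \<or> pv i0 = t - 1 \<or> pv i0 = t"
  using i0 t2 unfolding pv_def by auto

lemma adjG_irr: "\<not> adjG a a"
  unfolding adjG_def delete_edge_def G_ndt_def by auto

lemma adjG_sym: "adjG a b = adjG b a"
  unfolding adjG_def delete_edge_def G_ndt_def by auto

lemma adjG_PP: "a \<le> d \<Longrightarrow> c \<le> d \<Longrightarrow> adjG a c \<longleftrightarrow> (c = Suc a \<or> a = Suc c)"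
  using dn dw unfolding adjG_def delete_edge_def G_ndt_def by auto

lemma adjG_CC: "d < a \<Longrightarrow> a < n \<Longrightarrow> d < c \<Longrightarrow> c < n \<Longrightarrow> adjG a c \<longleftrightarrow> a \<noteq> c"
  using pv_i0 td unfolding adjG_def delete_edge_def G_ndt_def pv_def by auto

lemma adjG_PC: "a \<le> d \<Longrightarrow> d < c \<Longrightarrow> c < n \<Longrightarrow>
   adjG a c \<longleftrightarrow> ((a = t - 2 \<or> a = t - 1 \<or> a = t) \<and> \<not> (a = pv i0 \<and> c = w))"
  using dn t2 td dw unfolding adjG_def delete_edge_def G_ndt_def pv_def by auto

definition xv :: "(nat \<Rightarrow> real) \<Rightarrow> nat \<Rightarrow> real" where
  "xv b a = (if a \<le> d then (if a = t - 1 then 0 else if a = t then - b (t - 2) else b a)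
             else if a = w then b (t - 1) else b t)"

definition kk where "kk = n - Suc d"
definition lw where "lw = w - Suc d"

lemma n_split: "n = Suc d + kk" using dn unfolding kk_def by simp
lemma lw_lt: "lw < kk" and w_eq: "w = Suc d + lw" using dw wn unfolding lw_def kk_def by auto
lemma kk2: "2 \<le> kk" using dn unfolding kk_def by simp

lemma xv_C: "xv b (Suc d + l) = (if l = lw then b (t - 1) else b t)"
  unfolding xv_def using w_eq by auto

lemma block_PP:
  "(\<Sum>a<Suc d. \<Sum>c<Suc d. if adjG a c then (xv b a - xv b c)^2 else 0)
    = 2 * (\<Sum>j<d. (xv b j - xv b (Suc j))^2)"
proof -
  define f where "f j = (xv b j - xv b (Suc j))^2" for j
  have pt: "(if adjG a c then (xv b a - xv b c)^2 else 0) = (if c = Suc a then f a else 0) + (if a = Suc c then f c else 0)"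
    if "a < Suc d" "c < Suc d" for a c
    using adjG_PP[of a c] that unfolding f_def by (auto simp: power2_commute)
  have e0: "(\<Sum>a<Suc d. \<Sum>c<Suc d. if adjG a c then (xv b a - xv b c)^2 else 0)
      = (\<Sum>a<Suc d. \<Sum>c<Suc d. if c = Suc a then f a else 0) + (\<Sum>a<Suc d. \<Sum>c<Suc d. if a = Suc c then f c else 0)"
    using pt by (simp add: sum.distrib)
  have e1: "(\<Sum>a<Suc d. \<Sum>c<Suc d. if a = Suc c then f c else 0) = (\<Sum>c<Suc d. \<Sum>a<Suc d. if a = Suc c then f c else 0)"
    by (rule sum.swap)
  have e2: "(\<Sum>c<Suc d. \<Sum>a<Suc d. if a = Suc c then f c else 0) = (\<Sum>c<Suc d. if c < d then f c else 0)"
  proof (rule sum.cong[OF refl])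
    fix c assume "c \<in> {..<Suc d}"
    show "(\<Sum>a<Suc d. if a = Suc c then f c else 0) = (if c < d then f c else 0)"
      by (subst sum.delta) auto
  qed
  have e3: "(\<Sum>a<Suc d. \<Sum>c<Suc d. if c = Suc a then f a else 0) = (\<Sum>c<Suc d. if c < d then f c else 0)"
  proof (rule sum.cong[OF refl])
    fix a assume "a \<in> {..<Suc d}"
    show "(\<Sum>c<Suc d. if c = Suc a then f a else 0) = (if a < d then f a else 0)"
      by (subst sum.delta) auto
  qed
  have e4: "(\<Sum>c<Suc d. if c < d then f c else 0) = (\<Sum>c<d. f c)"
    by (simp only: sum.lessThan_Suc) simp
  have "(\<Sum>a<Suc d. \<Sum>c<Suc d. if adjG a c then (xv b a - xv b c)^2 else 0) = 2 * (\<Sum>c<d. f c)"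
    unfolding e0 e1 e2 e3 e4 by simp
  then show ?thesis unfolding f_def by simp
qed

definition GG :: "(nat \<Rightarrow> real) \<Rightarrow> nat \<Rightarrow> real" where
  "GG b a = (if a = pv i0 then 0 else (xv b a - b (t - 1))^2) + (real kk - 1) * (xv b a - b t)^2"

lemma block_PC:
  "(\<Sum>a<Suc d. \<Sum>l<kk. if adjG a (Suc d + l) then (xv b a - xv b (Suc d + l))^2 else 0)
    = GG b (t - 2) + GG b (t - 1) + GG b t"
proof -
  have inner: "(\<Sum>l<kk. if adjG a (Suc d + l) then (xv b a - xv b (Suc d + l))^2 else 0)
     = (if a = t - 2 \<or> a = t - 1 \<or> a = t then GG b a else 0)" if a: "a < Suc d" for a
  proof (cases "a = t - 2 \<or> a = t - 1 \<or> a = t")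
    case True
    have "(\<Sum>l<kk. if adjG a (Suc d + l) then (xv b a - xv b (Suc d + l))^2 else 0)
       = (\<Sum>l<kk. if l = lw then (if a = pv i0 then 0 else (xv b a - b (t - 1))^2) else (xv b a - b t)^2)"
    proof (rule sum.cong[OF refl])
      fix l assume "l \<in> {..<kk}"
      then have l: "Suc d + l < n" using n_split by simp
      show "(if adjG a (Suc d + l) then (xv b a - xv b (Suc d + l))^2 else 0)
         = (if l = lw then (if a = pv i0 then 0 else (xv b a - b (t - 1))^2) else (xv b a - b t)^2)"
        using adjG_PC[of a "Suc d + l"] a l True xv_C[of b l] w_eq by auto
    qed
    also have "\<dots> = GG b a" unfolding GG_def by (rule sum_if_one[OF lw_lt])
    finally show ?thesis using True by simp
  next
    case False
    have "(\<Sum>l<kk. if adjG a (Suc d + l) then (xv b a - xv b (Suc d + l))^2 else 0) = 0"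
    proof (rule sum.neutral, rule ballI)
      fix l assume "l \<in> {..<kk}"
      then have l: "Suc d + l < n" using n_split by simp
      show "(if adjG a (Suc d + l) then (xv b a - xv b (Suc d + l))^2 else 0) = 0"
        using adjG_PC[of a "Suc d + l"] a l False by auto
    qed
    then show ?thesis using False by simp
  qed
  have "(\<Sum>a<Suc d. \<Sum>l<kk. if adjG a (Suc d + l) then (xv b a - xv b (Suc d + l))^2 else 0)
      = (\<Sum>a<Suc d. if a = t - 2 \<or> a = t - 1 \<or> a = t then GG b a else 0)"
    using inner by (intro sum.cong) auto
  also have "\<dots> = GG b (t - 2) + GG b (t - 1) + GG b t"
    using t2 td by (intro sum_if_three) auto
  finally show ?thesis .
qed

lemma block_CP:
  "(\<Sum>l<kk. \<Sum>c<Suc d. if adjG (Suc d + l) c then (xv b (Suc d + l) - xv b c)^2 else 0)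
    = (\<Sum>a<Suc d. \<Sum>l<kk. if adjG a (Suc d + l) then (xv b a - xv b (Suc d + l))^2 else 0)"
proof -
  have "(\<Sum>l<kk. \<Sum>c<Suc d. if adjG (Suc d + l) c then (xv b (Suc d + l) - xv b c)^2 else 0)
      = (\<Sum>c<Suc d. \<Sum>l<kk. if adjG (Suc d + l) c then (xv b (Suc d + l) - xv b c)^2 else 0)"
    by (rule sum.swap)
  also have "\<dots> = (\<Sum>a<Suc d. \<Sum>l<kk. if adjG a (Suc d + l) then (xv b a - xv b (Suc d + l))^2 else 0)"
  proof (intro sum.cong refl)
    fix a l
    show "(if adjG (Suc d + l) a then (xv b (Suc d + l) - xv b a)^2 else 0)
       = (if adjG a (Suc d + l) then (xv b a - xv b (Suc d + l))^2 else 0)"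
      using adjG_sym[of "Suc d + l" a] by (simp add: power2_commute)
  qed
  finally show ?thesis .
qed

lemma block_CC:
  "(\<Sum>l<kk. \<Sum>l'<kk. if adjG (Suc d + l) (Suc d + l') then (xv b (Suc d + l) - xv b (Suc d + l'))^2 else 0)
    = 2 * (real kk - 1) * (b (t - 1) - b t)^2"
proof -
  define y where "y = b (t - 1)"
  define z where "z = b t"
  have pt: "(if adjG (Suc d + l) (Suc d + l') then (xv b (Suc d + l) - xv b (Suc d + l'))^2 else 0)
     = (if l' = lw then (if l = lw then 0 else (y - z)^2) else (if l = lw then (y - z)^2 else 0))"
    if "l < kk" "l' < kk" for l l'
    using that adjG_CC[of "Suc d + l" "Suc d + l'"] n_split unfolding xv_C y_def z_def
    by (auto simp: power2_commute)
  have "(\<Sum>l<kk. \<Sum>l'<kk. if adjG (Suc d + l) (Suc d + l') then (xv b (Suc d + l) - xv b (Suc d + l'))^2 else 0)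
     = (\<Sum>l<kk. \<Sum>l'<kk. (if l' = lw then (if l = lw then 0 else (y - z)^2) else (if l = lw then (y - z)^2 else 0)))"
    using pt by (intro sum.cong refl) auto
  also have "\<dots> = (\<Sum>l<kk. (if l = lw then 0 else (y - z)^2) + (real kk - 1) * (if l = lw then (y - z)^2 else 0))"
    by (intro sum.cong refl) (rule sum_if_one[OF lw_lt])
  also have "\<dots> = (\<Sum>l<kk. if l = lw then (real kk - 1) * (y - z)^2 else (y - z)^2)"
    by (intro sum.cong refl) auto
  also have "\<dots> = 2 * (real kk - 1) * (y - z)^2"
    by (subst sum_if_one[OF lw_lt]) (simp add: algebra_simps)
  finally show ?thesis unfolding y_def z_def .
qed

lemma quad_xv:
  "2 * dotf n (xv b) (mvf n (laplacian n adjG) (xv b))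
   = 2 * (\<Sum>j<d. (xv b j - xv b (Suc j))^2) + 2 * (GG b (t - 2) + GG b (t - 1) + GG b t)
     + 2 * (real kk - 1) * (b (t - 1) - b t)^2"
proof -
  have "2 * dotf n (xv b) (mvf n (laplacian n adjG) (xv b))
     = (\<Sum>a<n. \<Sum>c<n. if adjG a c then (xv b a - xv b c)^2 else 0)"
    by (rule lap_quad) (auto simp: adjG_irr adjG_sym[of _ _])
  also have "\<dots> = (\<Sum>a<Suc d + kk. \<Sum>c<Suc d + kk. if adjG a c then (xv b a - xv b c)^2 else 0)"
    using n_split by simp
  also have "\<dots> = (\<Sum>a<Suc d. \<Sum>c<Suc d. if adjG a c then (xv b a - xv b c)^2 else 0)
      + (\<Sum>a<Suc d. \<Sum>l<kk. if adjG a (Suc d + l) then (xv b a - xv b (Suc d + l))^2 else 0)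
      + (\<Sum>l<kk. \<Sum>c<Suc d. if adjG (Suc d + l) c then (xv b (Suc d + l) - xv b c)^2 else 0)
      + (\<Sum>l<kk. \<Sum>l'<kk. if adjG (Suc d + l) (Suc d + l') then (xv b (Suc d + l) - xv b (Suc d + l'))^2 else 0)"
    by (rule dsum_split)
  also have "\<dots> = 2 * (\<Sum>j<d. (xv b j - xv b (Suc j))^2) + 2 * (GG b (t - 2) + GG b (t - 1) + GG b t)
     + 2 * (real kk - 1) * (b (t - 1) - b t)^2"
    unfolding block_CP block_PP block_PC block_CC by simp
  finally show ?thesis .
qed

lemma norm_xv:
  "dotf n (xv b) (xv b) = (\<Sum>a<Suc d. (xv b a)^2) + (b (t - 1))^2 + (real kk - 1) * (b t)^2"
proof -
  have "dotf n (xv b) (xv b) = (\<Sum>a<Suc d + kk. (xv b a)^2)"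
    unfolding dotf_def using n_split by (simp add: power2_eq_square)
  also have "\<dots> = (\<Sum>a<Suc d. (xv b a)^2) + (\<Sum>l<kk. (xv b (Suc d + l))^2)"
    by (rule sum_split_add)
  also have "(\<Sum>l<kk. (xv b (Suc d + l))^2) = (\<Sum>l<kk. if l = lw then (b (t - 1))^2 else (b t)^2)"
    unfolding xv_C by (intro sum.cong) auto
  also have "\<dots> = (b (t - 1))^2 + (real kk - 1) * (b t)^2" by (rule sum_if_one[OF lw_lt])
  finally show ?thesis by simp
qed

definition al :: "nat \<Rightarrow> real" where
  "al j = (if Suc (Suc (Suc j)) = t then 7/3 else if Suc (Suc j) = t then 1 else if Suc j = t then 0
           else if j = t then 7/4 else 2)"
definition be :: "nat \<Rightarrow> real" where
  "be j = (if Suc (Suc (Suc j)) = t then 7/4 else if Suc (Suc j) = t then 0 else if Suc j = t then 1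
           else if j = t then 7/3 else 2)"
definition ka :: "nat \<Rightarrow> real" where
  "ka v = (if v < d then al v else 0) + (if 0 < v then be (v - 1) else 0)"

lemma xv_path: "a \<le> d \<Longrightarrow> xv b a = (if a = t - 1 then 0 else if a = t then - b (t - 2) else b a)"
  unfolding xv_def by simp

lemma edge_bound:
  assumes j: "j < d"
  shows "(xv b j - xv b (Suc j))^2 \<le> al j * (xv b j)^2 + be j * (xv b (Suc j))^2"
proof -
  have i1: "(p - q)^2 \<le> 7/3 * p^2 + 7/4 * (q::real)^2" for p q
    using zero_le_power2[of "4*p+3*q"] by (simp add: power2_eq_square algebra_simps)
  have i2: "(p - q)^2 \<le> 7/4 * p^2 + 7/3 * (q::real)^2" for p q
    using zero_le_power2[of "3*p+4*q"] by (simp add: power2_eq_square algebra_simps)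
  have i3: "(p - q)^2 \<le> 2 * p^2 + 2 * (q::real)^2" for p q
    using zero_le_power2[of "p+q"] by (simp add: power2_eq_square algebra_simps)
  have x1: "xv b (Suc j) = 0" if "Suc (Suc j) = t" using that j xv_path[of "Suc j"] by simp
  have x0: "xv b j = 0" if "Suc j = t" using that j xv_path[of j] by simp
  show ?thesis
  proof (cases "Suc (Suc (Suc j)) = t")
    case True then show ?thesis unfolding al_def be_def using i1 by simp
  next
    case F1: False
    show ?thesis
    proof (cases "Suc (Suc j) = t")
      case True then show ?thesis unfolding al_def be_def using x1 by simp
    next
      case F2: False
      show ?thesis
      proof (cases "Suc j = t")
        case True then show ?thesis unfolding al_def be_def using x0 by (simp add: power2_commute)
      next
        case F3: False
        show ?thesis
        proof (cases "j = t")
          case True then show ?thesis unfolding al_def be_def using F1 F2 F3 i2 by simp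
        next
          case False then show ?thesis unfolding al_def be_def using F1 F2 F3 i3 by simp
        qed
      qed
    qed
  qed
qed

lemma path_bound:
  "(\<Sum>j<d. (xv b j - xv b (Suc j))^2) \<le> (\<Sum>v<Suc d. ka v * (xv b v)^2)"
proof -
  have "(\<Sum>j<d. (xv b j - xv b (Suc j))^2) \<le> (\<Sum>j<d. al j * (xv b j)^2 + be j * (xv b (Suc j))^2)"
    using edge_bound by (intro sum_mono) auto
  also have "\<dots> = (\<Sum>j<d. al j * (xv b j)^2) + (\<Sum>j<d. be j * (xv b (Suc j))^2)"
    by (rule sum.distrib)
  also have "(\<Sum>j<d. al j * (xv b j)^2) = (\<Sum>v<Suc d. (if v < d then al v else 0) * (xv b v)^2)"
    by (simp only: sum.lessThan_Suc) simp
  also have "(\<Sum>j<d. be j * (xv b (Suc j))^2) = (\<Sum>v<Suc d. (if 0 < v then be (v - 1) else 0) * (xv b v)^2)"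
    by (simp only: sum.lessThan_Suc_shift) simp
  also have "(\<Sum>v<Suc d. (if v < d then al v else 0) * (xv b v)^2) + (\<Sum>v<Suc d. (if 0 < v then be (v - 1) else 0) * (xv b v)^2)
     = (\<Sum>v<Suc d. ka v * (xv b v)^2)"
    unfolding ka_def sum.distrib[symmetric] by (simp add: algebra_simps)
  finally show ?thesis .
qed

lemma ka_le: "ka v \<le> 13/3"
  unfolding ka_def al_def be_def by auto

lemma ka_le2: "v = t - 2 \<or> v = t \<Longrightarrow> ka v \<le> 11/4"
  using t2 unfolding ka_def al_def be_def by auto

lemma vertex_bound:
  assumes v: "v < Suc d"
  shows "ka v * (xv b v)^2 - (real kk + 3) * (xv b v)^2 + (if v = t - 2 \<or> v = t then real kk * (xv b v)^2 else 0)
    \<le> - (1/4) * (xv b v)^2"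
proof (cases "v = t - 1")
  case True
  then have "xv b v = 0" using xv_path[of v] v by simp
  then show ?thesis by simp
next
  case False
  have sq: "0 \<le> (xv b v)^2" by simp
  show ?thesis
  proof (cases "v = t - 2 \<or> v = t")
    case True
    have "ka v * (xv b v)^2 \<le> 11/4 * (xv b v)^2" using ka_le2[OF True] sq by (rule mult_right_mono)
    then show ?thesis using True by (simp add: algebra_simps)
  next
    case F: False
    have "ka v * (xv b v)^2 \<le> 13/3 * (xv b v)^2" using ka_le sq by (rule mult_right_mono)
    moreover have "(13/3 - real kk - 3) * (xv b v)^2 \<le> (- 1/4) * (xv b v)^2"
      using kk2 sq by (intro mult_right_mono) auto
    ultimately show ?thesis using F by (simp add: algebra_simps)
  qed
qed

lemma neg_xv:
  assumes bnz: "\<exists>l<Suc d. b l \<noteq> 0"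
  shows "dotf n (xv b) (mvf n (laplacian n adjG) (xv b)) < (real kk + 3) * dotf n (xv b) (xv b)"
proof -
  define K where "K = real kk"
  define P where "P = (\<Sum>v<Suc d. (xv b v)^2)"
  define PE where "PE = (\<Sum>j<d. (xv b j - xv b (Suc j))^2)"
  define s where "s = b (t - 2)"
  define y where "y = b (t - 1)"
  define z where "z = b t"
  define xp where "xp = xv b (pv i0)"
  have K2: "2 \<le> K" unfolding K_def using kk2 by simp
  have xa: "xv b (t - 2) = s" using xv_path[of "t - 2"] t2 td unfolding s_def by auto
  have xb: "xv b (t - 1) = 0" using xv_path[of "t - 1"] td by simp
  have xc: "xv b t = - s" using xv_path[of t] t2 td unfolding s_def by auto
  have PE_le: "PE \<le> (\<Sum>v<Suc d. ka v * (xv b v)^2)" unfolding PE_def by (rule path_bound)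
  have VB: "(\<Sum>v<Suc d. ka v * (xv b v)^2 - (K + 3) * (xv b v)^2 + (if v = t - 2 \<or> v = t then K * (xv b v)^2 else 0))
      \<le> (\<Sum>v<Suc d. - (1/4) * (xv b v)^2)"
    unfolding K_def using vertex_bound by (intro sum_mono) auto
  have two: "(\<Sum>v<Suc d. if v = t - 2 \<or> v = t then K * (xv b v)^2 else 0) = 2 * K * s^2"
  proof -
    have "(\<Sum>v<Suc d. if v = t - 2 \<or> v = t then K * (xv b v)^2 else 0) = K * (xv b (t - 2))^2 + K * (xv b t)^2"
      using t2 td by (intro sum_if_two) auto
    then show ?thesis using xa xc by simp
  qed
  have VB2: "(\<Sum>v<Suc d. ka v * (xv b v)^2) - (K + 3) * P + 2 * K * s^2 \<le> - (1/4) * P"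
    using VB unfolding sum.distrib sum_subtractf two P_def sum_distrib_left[symmetric] by simp
  have Pnn: "0 \<le> P" unfolding P_def by (intro sum_nonneg) auto
  have xLx: "dotf n (xv b) (mvf n (laplacian n adjG) (xv b)) = PE + (GG b (t - 2) + GG b (t - 1) + GG b t) + (K - 1) * (y - z)^2"
    using quad_xv[of b] unfolding PE_def K_def y_def z_def by (simp add: algebra_simps)
  have nrm: "dotf n (xv b) (xv b) = P + y^2 + (K - 1) * z^2"
    using norm_xv[of b] unfolding P_def K_def y_def z_def .
  have ID: "(GG b (t - 2) + GG b (t - 1) + GG b t) + (K - 1) * (y - z)^2 - (K + 3) * (y^2 + (K - 1) * z^2)
     = 2 * K * s^2 - (y + (K - 1) * z)^2 - (y - xp)^2"
  proof -
    have d1: "t - 2 \<noteq> t - 1" "t - 2 \<noteq> t" "t - 1 \<noteq> t" using t2 by auto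
    have G3: "GG b (t - 2) + GG b (t - 1) + GG b t =
       (if pv i0 = t - 2 then 0 else (s - y)^2) + (if pv i0 = t - 1 then 0 else y^2) + (if pv i0 = t then 0 else (s + y)^2)
       + (K - 1) * ((s - z)^2 + z^2 + (s + z)^2)"
      unfolding GG_def xa xb xc K_def y_def[symmetric] z_def[symmetric]
      by (simp add: algebra_simps power2_eq_square)
    show ?thesis
      using pv_i0
    proof (elim disjE)
      assume h: "pv i0 = t - 2"
      then have "xp = s" unfolding xp_def using xa by simp
      then show ?thesis unfolding G3 using h d1 by (simp add: power2_eq_square algebra_simps)
    next
      assume h: "pv i0 = t - 1"
      then have "xp = 0" unfolding xp_def using xb by simp
      then show ?thesis unfolding G3 using h d1 by (simp add: power2_eq_square algebra_simps)
    next
      assume h: "pv i0 = t"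
      then have "xp = - s" unfolding xp_def using xc by simp
      then show ?thesis unfolding G3 using h d1 by (simp add: power2_eq_square algebra_simps)
    qed
  qed
  have main: "dotf n (xv b) (mvf n (laplacian n adjG) (xv b)) - (K + 3) * dotf n (xv b) (xv b)
     \<le> - (1/4) * P - (y + (K - 1) * z)^2 - (y - xp)^2"
  proof -
    have "dotf n (xv b) (mvf n (laplacian n adjG) (xv b)) - (K + 3) * dotf n (xv b) (xv b)
        = PE - (K + 3) * P + ((GG b (t - 2) + GG b (t - 1) + GG b t) + (K - 1) * (y - z)^2 - (K + 3) * (y^2 + (K - 1) * z^2))"
      unfolding xLx nrm by (simp add: algebra_simps)
    also have "\<dots> = PE - (K + 3) * P + 2 * K * s^2 - (y + (K - 1) * z)^2 - (y - xp)^2"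
      unfolding ID by simp
    finally show ?thesis using PE_le VB2 by linarith
  qed
  have strict: "- (1/4) * P - (y + (K - 1) * z)^2 - (y - xp)^2 < 0"
  proof (cases "P = 0")
    case False
    then have "0 < P" using Pnn by simp
    then show ?thesis using zero_le_power2[of "y + (K - 1) * z"] zero_le_power2[of "y - xp"] by linarith
  next
    case True
    have allz: "xv b v = 0" if "v < Suc d" for v
    proof -
      have "(\<Sum>v<Suc d. (xv b v)^2) = 0" using True unfolding P_def .
      then have "\<forall>v\<in>{..<Suc d}. (xv b v)^2 = 0" by (subst (asm) sum_nonneg_eq_0_iff) auto
      then show ?thesis using that by simp
    qed
    have "xp = 0" unfolding xp_def using allz pv_i0 td by auto
    obtain l where l: "l < Suc d" "b l \<noteq> 0" using bnz by blast
    have yz: "y \<noteq> 0 \<or> z \<noteq> 0"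
    proof (rule ccontr)
      assume "\<not> ?thesis"
      then have "y = 0" "z = 0" by auto
      moreover have "l \<noteq> t - 1" "l \<noteq> t" using l \<open>y = 0\<close> \<open>z = 0\<close> unfolding y_def z_def by auto
      then have "xv b l = b l" using xv_path[of l] l by simp
      then show False using allz[OF l(1)] l(2) by simp
    qed
    show ?thesis
    proof (cases "y = 0")
      case False
      then have "0 < (y - xp)^2" using \<open>xp = 0\<close> by simp
      then show ?thesis using Pnn True zero_le_power2[of "y + (K - 1) * z"] by linarith
    next
      case True
      then have "z \<noteq> 0" using yz by simp
      then have "(K - 1) * z \<noteq> 0" using K2 by simp
      then have "0 < (y + (K - 1) * z)^2" using True by simp
      then show ?thesis using Pnn zero_le_power2[of "y - xp"] by linarith
    qed
  qed
  show ?thesis using main strict unfolding K_def by linarith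
qed

definition tg :: "nat \<Rightarrow> nat" where
  "tg a = (if a \<le> d then (if a = t then t - 2 else a) else if a = w then t - 1 else t)"
definition cf :: "nat \<Rightarrow> real" where
  "cf a = (if a \<le> d then (if a = t - 1 then 0 else if a = t then -1 else 1) else 1)"

lemma final_bound:
  "lap_mu n (delete_edge (G_ndt n d t) (pv i0) w) (n - d) < real (n - d + 2)"
proof -
  define A where "A = laplacian n adjG"
  define Y where "Y a l = (if l = tg a then cf a else 0)" for a l
  have Acar: "A \<in> carrier_mat n n" unfolding A_def laplacian_def by simp
  have Asym: "A $$ (a, c) = A $$ (c, a)" if "a < n" "c < n" for a c
    using that adjG_sym[of a c] unfolding A_def laplacian_def by auto
  have Yx: "(\<Sum>l<Suc d. Y a l * b l) = xv b a" for a b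
  proof -
    have "tg a < Suc d" unfolding tg_def using t2 td by auto
    have "(\<Sum>l<Suc d. Y a l * b l) = (\<Sum>l<Suc d. if l = tg a then cf a * b l else 0)"
      unfolding Y_def by (intro sum.cong) auto
    also have "\<dots> = cf a * b (tg a)" using \<open>tg a < Suc d\<close> by (subst sum.delta) auto
    also have "\<dots> = xv b a" unfolding cf_def tg_def xv_def by auto
    finally show ?thesis .
  qed
  have neg: "dotf n (\<lambda>i. \<Sum>l<Suc d. Y i l * b l) (mvf n A (\<lambda>i. \<Sum>l<Suc d. Y i l * b l))
       < real (n - d + 2) * dotf n (\<lambda>i. \<Sum>l<Suc d. Y i l * b l) (\<lambda>i. \<Sum>l<Suc d. Y i l * b l)"
    if bnz: "\<exists>l<Suc d. b l \<noteq> 0" for b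
  proof -
    have e: "(\<lambda>i. \<Sum>l<Suc d. Y i l * b l) = xv b" using Yx by (intro ext) simp
    have r: "real (n - d + 2) = real kk + 3" unfolding kk_def using dn by simp
    show ?thesis unfolding e A_def r by (rule neg_xv[OF bnz])
  qed
  have "eigenvalues_desc A ! (n - Suc d) < real (n - d + 2)"
    by (rule eig_bound[OF Acar Asym _ _ neg]) (use dn in auto)
  moreover have "n - d - 1 = n - Suc d" by simp
  ultimately show ?thesis unfolding lap_mu_def A_def adjG_def by simp
qed

end

theorem lemma4p4:
  fixes n d t w i :: nat
  assumes "2 \<le> d" and "d + 3 \<le> n" and "2 \<le> t" and "t \<le> d"
    and "d < w" and "w < n"
    and "i \<in> {t - 1, t, t + 1}"
  shows "lap_mu n (delete_edge (G_ndt n d t) (pv i) w) (n - d) < real (n - d + 2)"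
  by (rule final_bound[OF assms])


end
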